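(* Let $L$ be a differential graded Lie algebra with differential $\delta$ (degree $-1$) and bracket $[\cdot,\cdot]$ (degree $0$), and let $D$ be the operator equal to $\delta$ on $L_1$ and zero on $L_i$, $i\ne1$. Fix $n$ and homogeneous elements $a_0,\dots,a_n\in L$. For $j,k\ge0$ with $j+k<n$ define $$Z_{n,j,k}=\sum_{\pi\in S_{n+1}}(-1)^{\varepsilon+|a_{\pi_1}|+\dots+|a_{\pi_j}|}\,\Big[\dots\Big[\big[\dots[Da_{\pi_0},a_{\pi_1}],\dots,a_{\pi_j}\big],\big[\dots[Da_{\pi_{j+1}},a_{\pi_{j+2}}],\dots,a_{\pi_{j+k+1}}\big]\Big],a_{\pi_{j+k+2}}\Big],\dots,a_{\pi_n}\Big],$$ i.e. the left-nested bracket of $Da_{\pi_0}$ with $a_{\pi_1},\dots,a_{\pi_j}$ is bracketed with the left-nested bracket of $Da_{\pi_{j+1}}$ with $a_{\pi_{j+2}},\dots,a_{\pi_{j+k+1}}$, and the result is then successively bracketed on the right with $a_{\pi_{j+k+2}},\dots,a_{\pi_n}$; here $(-1)^\varepsilon$ is the Koszul sign of the action of $\pi$ on $a_0\otimes\dots\otimes a_n$. Then $Z_{n,j,k}=Z_{n,k,j}$, and if $j+k+1<n$, then $Z_{n,j,k}=Z_{n,j+1,k}+Z_{n,j,k+1}$.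
   Context: A differential graded Lie algebra: $\mathbb{Z}$-graded vector space $L=\bigoplus_iL_i$ with graded antisymmetric bracket of degree $0$ satisfying the graded Jacobi identity and a square-zero derivation $\delta:L_i\to L_{i-1}$. *)

theory Defs
  imports "HOL-Combinatorics.Permutations"
begin

definition sgn_act :: "int \<Rightarrow> 'v::ab_group_add \<Rightarrow> 'v" where
  "sgn_act e v = (if even e then v else - v)"

definition graded_vs :: "('k::field \<Rightarrow> 'v::ab_group_add \<Rightarrow> 'v) \<Rightarrow> (int \<Rightarrow> 'v set) \<Rightarrow> bool" where
  "graded_vs scale Lg \<longleftrightarrow>
     (\<forall>c v w. scale c (v + w) = scale c v + scale c w) \<and>
     (\<forall>c e v. scale (c + e) v = scale c v + scale e v) \<and>
     (\<forall>c e v. scale (c * e) v = scale c (scale e v)) \<and>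
     (\<forall>v. scale 1 v = v) \<and>
     (\<forall>i. 0 \<in> Lg i \<and> (\<forall>v\<in>Lg i. \<forall>w\<in>Lg i. v + w \<in> Lg i) \<and> (\<forall>c. \<forall>v\<in>Lg i. scale c v \<in> Lg i)) \<and>
     (\<forall>v. \<exists>!f :: int \<Rightarrow> 'v. finite {i. f i \<noteq> 0} \<and> (\<forall>i. f i \<in> Lg i) \<and> v = sum f {i. f i \<noteq> 0})"

definition proj :: "(int \<Rightarrow> 'v::ab_group_add set) \<Rightarrow> int \<Rightarrow> 'v \<Rightarrow> 'v" where
  "proj Lg i v = (THE f :: int \<Rightarrow> 'v. finite {i. f i \<noteq> 0} \<and> (\<forall>i. f i \<in> Lg i) \<and> v = sum f {i. f i \<noteq> 0}) i"

definition dgla :: "('k::field \<Rightarrow> 'v::ab_group_add \<Rightarrow> 'v) \<Rightarrow> (int \<Rightarrow> 'v set)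
                    \<Rightarrow> ('v \<Rightarrow> 'v \<Rightarrow> 'v) \<Rightarrow> ('v \<Rightarrow> 'v) \<Rightarrow> bool" where
  "dgla scale Lg br d \<longleftrightarrow>
     graded_vs scale Lg \<and>
     \<comment> \<open>bilinear bracket of degree 0\<close>
     (\<forall>x y z. br (x + y) z = br x z + br y z) \<and>
     (\<forall>x y z. br x (y + z) = br x y + br x z) \<and>
     (\<forall>c x y. br (scale c x) y = scale c (br x y)) \<and>
     (\<forall>c x y. br x (scale c y) = scale c (br x y)) \<and>
     (\<forall>i j. \<forall>x\<in>Lg i. \<forall>y\<in>Lg j. br x y \<in> Lg (i + j)) \<and>
     \<comment> \<open>graded antisymmetry\<close>
     (\<forall>i j. \<forall>x\<in>Lg i. \<forall>y\<in>Lg j. br x y = - sgn_act (i * j) (br y x)) \<and>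
     \<comment> \<open>graded Jacobi identity\<close>
     (\<forall>i j l. \<forall>x\<in>Lg i. \<forall>y\<in>Lg j. \<forall>z\<in>Lg l.
         br x (br y z) = br (br x y) z + sgn_act (i * j) (br y (br x z))) \<and>
     \<comment> \<open>linear square-zero derivation of degree -1\<close>
     (\<forall>x y. d (x + y) = d x + d y) \<and>
     (\<forall>c x. d (scale c x) = scale c (d x)) \<and>
     (\<forall>i. \<forall>x\<in>Lg i. d x \<in> Lg (i - 1)) \<and>
     (\<forall>x. d (d x) = 0) \<and>
     (\<forall>i. \<forall>x\<in>Lg i. \<forall>y. d (br x y) = br (d x) y + sgn_act i (br x (d y)))"

definition Dop :: "(int \<Rightarrow> 'v::ab_group_add set) \<Rightarrow> ('v \<Rightarrow> 'v) \<Rightarrow> 'v \<Rightarrow> 'v" where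
  "Dop Lg d v = d (proj Lg 1 v)"

text \<open>Exponent of the Koszul sign of the permutation p acting on a_0 \<otimes> ... \<otimes> a_n,
  giving a_{p 0} \<otimes> ... \<otimes> a_{p n}: each pair of positions r < s with p r > p s
  contributes |a_{p r}| |a_{p s}|.\<close>
definition koszul_exp :: "(nat \<Rightarrow> int) \<Rightarrow> nat \<Rightarrow> (nat \<Rightarrow> nat) \<Rightarrow> int" where
  "koszul_exp deg n p =
     (\<Sum>(r, s)\<in>{(r, s). r < s \<and> s \<le> n \<and> p s < p r}. deg (p r) * deg (p s))"

definition lnest :: "('v \<Rightarrow> 'v \<Rightarrow> 'v) \<Rightarrow> 'v \<Rightarrow> 'v list \<Rightarrow> 'v" where
  "lnest br x bs = foldl br x bs"

definition Zterm :: "(int \<Rightarrow> 'v::ab_group_add set) \<Rightarrow> ('v \<Rightarrow> 'v \<Rightarrow> 'v) \<Rightarrow> ('v \<Rightarrow> 'v)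
                     \<Rightarrow> (nat \<Rightarrow> 'v) \<Rightarrow> (nat \<Rightarrow> int) \<Rightarrow> nat \<Rightarrow> nat \<Rightarrow> nat \<Rightarrow> 'v" where
  "Zterm Lg br d a deg n j k =
     (\<Sum>p\<in>{p. p permutes {0..n}}.
        sgn_act (koszul_exp deg n p + (\<Sum>i\<in>{1..j}. deg (p i)))
          (lnest br
             (br (lnest br (Dop Lg d (a (p 0))) (map (\<lambda>i. a (p i)) [1..<j+1]))
                 (lnest br (Dop Lg d (a (p (j+1)))) (map (\<lambda>i. a (p i)) [j+2..<j+k+2])))
             (map (\<lambda>i. a (p i)) [j+k+2..<n+1])))"

end

theory Submission
  imports Defs
begin


lemma sgn_act_cong: "even (e - e') \<Longrightarrow> sgn_act e v = sgn_act e' v"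
  unfolding sgn_act_def by (metis even_add diff_add_cancel)

lemma sgn_act_add: "sgn_act (e + e') v = sgn_act e (sgn_act e' v)"
  unfolding sgn_act_def by auto

lemma sgn_act_minus: "sgn_act e (- v) = - sgn_act e v"
  unfolding sgn_act_def by auto

lemma sgn_act_plus: "sgn_act e (v + w) = sgn_act e v + sgn_act e w"
  unfolding sgn_act_def by auto

lemma sgn_act_zero[simp]: "sgn_act e 0 = 0"
  unfolding sgn_act_def by auto

definition Pairs :: "nat \<Rightarrow> (nat \<times> nat) set" where
  "Pairs n = {(r, s). r < s \<and> s \<le> n}"

lemma finite_Pairs: "finite (Pairs n)"
  by (rule finite_subset[of _ "{0..n} \<times> {0..n}"]) (auto simp: Pairs_def)

lemma koszul_if: "koszul_exp deg n p =
  (\<Sum>x\<in>Pairs n. if p (snd x) < p (fst x) then deg (p (fst x)) * deg (p (snd x)) else 0)"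
proof -
  have "{(r, s). r < s \<and> s \<le> n \<and> p s < p r} = {x \<in> Pairs n. p (snd x) < p (fst x)}"
    by (auto simp: Pairs_def)
  then show ?thesis unfolding koszul_exp_def
    by (simp add: sum.inter_filter[OF finite_Pairs] case_prod_beta)
qed

lemma koszul_comp:
  assumes p: "p permutes {0..n}" and q: "q permutes {0..n}"
  shows "even (koszul_exp deg n (p \<circ> q) - koszul_exp deg n p - koszul_exp (deg \<circ> p) n q)"
proof -
  define \<phi> where "\<phi> x = (min (q (fst x)) (q (snd x)), max (q (fst x)) (q (snd x)))" for x
  define g where "g x = (if p (snd x) < p (fst x) then deg (p (fst x)) * deg (p (snd x)) else 0)" for x
  have qi: "inj_on q {0..n}" using q permutes_inj_on by blast
  have pi: "inj_on p {0..n}" using p permutes_inj_on by blast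
  have qim: "x \<le> n \<Longrightarrow> q x \<le> n" for x using permutes_in_image[OF q, of x] by auto
  have sub: "\<phi> ` Pairs n \<subseteq> Pairs n"
  proof
    fix y assume "y \<in> \<phi> ` Pairs n"
    then obtain r s where rs: "r < s" "s \<le> n" and y: "y = \<phi> (r, s)" by (auto simp: Pairs_def)
    have "q r \<noteq> q s" using qi rs by (metis atLeastAtMost_iff inj_on_eq_iff le0 less_imp_le order.trans nat_neq_iff)
    then show "y \<in> Pairs n" using y qim[of r] qim[of s] rs by (auto simp: Pairs_def \<phi>_def)
  qed
  have inj: "inj_on \<phi> (Pairs n)"
  proof
    fix x y assume x: "x \<in> Pairs n" and y: "y \<in> Pairs n" and e: "\<phi> x = \<phi> y"
    obtain r s r' s' where xy: "x = (r, s)" "y = (r', s')" by force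
    have rs: "r < s" "s \<le> n" "r' < s'" "s' \<le> n" using x y xy by (auto simp: Pairs_def)
    have "{q r, q s} = {q r', q s'}" using e xy unfolding \<phi>_def
      by (simp add: min_def max_def split: if_splits) (auto simp: doubleton_eq_iff)
    then have "q ` {r, s} = q ` {r', s'}" by simp
    then have "{r, s} = {r', s'}" using inj_on_image_eq_iff[OF qi, of "{r,s}" "{r',s'}"] rs by auto
    then show "x = y" using rs xy by (auto simp: doubleton_eq_iff)
  qed
  have bij: "bij_betw \<phi> (Pairs n) (Pairs n)"
    using endo_inj_surj[OF finite_Pairs sub inj] inj by (simp add: bij_betw_def)
  have r1: "sum (g \<circ> \<phi>) (Pairs n) = sum g (Pairs n)"
    using sum.reindex_bij_betw[OF bij, of g] by simp
  have termwise: "even ((if p (q (snd x)) < p (q (fst x)) then deg (p (q (fst x))) * deg (p (q (snd x))) else 0)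
      - g (\<phi> x) - (if q (snd x) < q (fst x) then (deg \<circ> p) (q (fst x)) * (deg \<circ> p) (q (snd x)) else 0))"
    if x: "x \<in> Pairs n" for x
  proof -
    obtain r s where xy: "x = (r, s)" by force
    have rs: "r < s" "s \<le> n" using x xy by (auto simp: Pairs_def)
    have qne: "q r \<noteq> q s" using qi rs by (metis atLeastAtMost_iff inj_on_eq_iff le0 less_imp_le order.trans nat_neq_iff)
    have pne: "p (q r) \<noteq> p (q s)" using pi qne qim[of r] qim[of s] rs
      by (metis atLeastAtMost_iff inj_on_eq_iff le0 less_imp_le order.trans)
    show ?thesis
    proof (cases "q r < q s")
      case True then show ?thesis using xy by (simp add: \<phi>_def g_def)
    next
      case False
      then have "q s < q r" using qne by simp
      then show ?thesis using xy pne by (auto simp: \<phi>_def g_def mult.commute)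
    qed
  qed
  have "koszul_exp deg n (p \<circ> q) - koszul_exp deg n p - koszul_exp (deg \<circ> p) n q
      = (\<Sum>x\<in>Pairs n. (if p (q (snd x)) < p (q (fst x)) then deg (p (q (fst x))) * deg (p (q (snd x))) else 0)
      - g (\<phi> x) - (if q (snd x) < q (fst x) then (deg \<circ> p) (q (fst x)) * (deg \<circ> p) (q (snd x)) else 0))"
    unfolding koszul_if sum_subtractf comp_def using r1 by (simp add: g_def[abs_def] comp_def)
  also have "even \<dots>" by (rule dvd_sum) (use termwise in auto)
  finally show ?thesis .
qed

lemma koszul_prod:
  assumes "{x \<in> Pairs n. q (snd x) < q (fst x)} = A \<times> B" "finite A" "finite B"
  shows "koszul_exp f n q = (\<Sum>i\<in>A. f (q i)) * (\<Sum>i\<in>B. f (q i))"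
proof -
  have "koszul_exp f n q = (\<Sum>x\<in>{x \<in> Pairs n. q (snd x) < q (fst x)}. f (q (fst x)) * f (q (snd x)))"
    unfolding koszul_if by (simp add: sum.inter_filter[OF finite_Pairs])
  also have "\<dots> = (\<Sum>x\<in>A \<times> B. f (q (fst x)) * f (q (snd x)))" using assms(1) by simp
  also have "\<dots> = (\<Sum>i\<in>A. f (q i)) * (\<Sum>i\<in>B. f (q i))"
    by (simp add: sum_product sum.cartesian_product case_prod_beta)
  finally show ?thesis .
qed

definition swp :: "nat \<Rightarrow> nat \<Rightarrow> nat \<Rightarrow> nat" where
  "swp j k i = (if i \<le> k then i + j + 1 else if i \<le> j + k + 1 then i - k - 1 else i)"

definition mv :: "nat \<Rightarrow> nat \<Rightarrow> nat \<Rightarrow> nat" where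
  "mv j k i = (if i = j + 1 then j + k + 2 else if j + 2 \<le> i \<and> i \<le> j + k + 2 then i - 1 else i)"

lemma swp_permutes: assumes "j + k < n" shows "swp j k permutes {0..n}"
proof (rule bij_imp_permutes)
  define t where "t i = (if i \<le> j then i + k + 1 else if i \<le> j + k + 1 then i - j - 1 else i)" for i
  show "bij_betw (swp j k) {0..n} {0..n}"
    by (rule bij_betw_byWitness[where f'=t]) (use assms in \<open>auto simp: swp_def t_def\<close>)
  show "x \<notin> {0..n} \<Longrightarrow> swp j k x = x" for x using assms by (auto simp: swp_def)
qed

lemma mv_permutes: assumes "j + k + 2 \<le> n" shows "mv j k permutes {0..n}"
proof (rule bij_imp_permutes)
  define t where "t i = (if i = j + k + 2 then j + 1 else if j + 1 \<le> i \<and> i \<le> j + k + 1 then i + 1 else i)" for i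
  show "bij_betw (mv j k) {0..n} {0..n}"
    by (rule bij_betw_byWitness[where f'=t]) (use assms in \<open>auto simp: mv_def t_def\<close>)
  show "x \<notin> {0..n} \<Longrightarrow> mv j k x = x" for x using assms by (auto simp: mv_def)
qed

lemma koszul_swp: assumes "j + k < n"
  shows "koszul_exp f n (swp j k) = (\<Sum>i\<in>{j+1..j+k+1}. f i) * (\<Sum>i\<in>{0..j}. f i)"
proof -
  have "{x \<in> Pairs n. swp j k (snd x) < swp j k (fst x)} = {0..k} \<times> {k+1..j+k+1}"
    using assms by (auto simp: Pairs_def swp_def split: if_splits)
  then have "koszul_exp f n (swp j k) = (\<Sum>i\<in>{0..k}. f (swp j k i)) * (\<Sum>i\<in>{k+1..j+k+1}. f (swp j k i))"
    by (rule koszul_prod) auto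
  also have "(\<Sum>i\<in>{0..k}. f (swp j k i)) = (\<Sum>i\<in>{0..k}. f (i + (j+1)))"
    by (rule sum.cong) (auto simp: swp_def)
  also have "\<dots> = (\<Sum>i\<in>{0+(j+1)..k+(j+1)}. f i)" by (rule sum.shift_bounds_cl_nat_ivl[symmetric])
  also have "(\<Sum>i\<in>{k+1..j+k+1}. f (swp j k i)) = (\<Sum>i\<in>{0+(k+1)..j+(k+1)}. f (i - (k+1)))"
    by (rule sum.cong) (auto simp: swp_def)
  also have "\<dots> = (\<Sum>i\<in>{0..j}. f i)" by (subst sum.shift_bounds_cl_nat_ivl) simp
  finally show ?thesis by (simp add: add.commute add.left_commute)
qed

lemma koszul_mv: assumes "j + k + 2 \<le> n"
  shows "koszul_exp f n (mv j k) = f (j+k+2) * (\<Sum>i\<in>{j+1..j+k+1}. f i)"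
proof -
  have "{x \<in> Pairs n. mv j k (snd x) < mv j k (fst x)} = {j+1} \<times> {j+2..j+k+2}"
    using assms by (auto simp: Pairs_def mv_def split: if_splits)
  then have "koszul_exp f n (mv j k) = (\<Sum>i\<in>{j+1}. f (mv j k i)) * (\<Sum>i\<in>{j+2..j+k+2}. f (mv j k i))"
    by (rule koszul_prod) auto
  also have "(\<Sum>i\<in>{j+2..j+k+2}. f (mv j k i)) = (\<Sum>i\<in>{(j+1)+1..(j+k+1)+1}. f (i - 1))"
    by (rule sum.cong) (auto simp: mv_def)
  also have "\<dots> = (\<Sum>i\<in>{j+1..j+k+1}. f i)" by (subst sum.shift_bounds_cl_nat_ivl) simp
  also have "(\<Sum>i\<in>{j+1}. f (mv j k i)) = f (j+k+2)" by (simp add: mv_def)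
  finally show ?thesis .
qed



lemma neg_sgn: "- v = sgn_act 1 v" unfolding sgn_act_def by simp

definition T :: "(int \<Rightarrow> 'v::ab_group_add set) \<Rightarrow> ('v \<Rightarrow> 'v \<Rightarrow> 'v) \<Rightarrow> ('v \<Rightarrow> 'v)
                     \<Rightarrow> (nat \<Rightarrow> 'v) \<Rightarrow> (nat \<Rightarrow> int) \<Rightarrow> nat \<Rightarrow> nat \<Rightarrow> nat \<Rightarrow> (nat \<Rightarrow> nat) \<Rightarrow> 'v" where
  "T Lg br d a deg n j k p =
        sgn_act (koszul_exp deg n p + (\<Sum>i\<in>{1..j}. deg (p i)))
          (lnest br
             (br (lnest br (Dop Lg d (a (p 0))) (map (\<lambda>i. a (p i)) [1..<j+1]))
                 (lnest br (Dop Lg d (a (p (j+1)))) (map (\<lambda>i. a (p i)) [j+2..<j+k+2])))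
             (map (\<lambda>i. a (p i)) [j+k+2..<n+1]))"

lemma Zterm_T: "Zterm Lg br d a deg n j k = sum (T Lg br d a deg n j k) {p. p permutes {0..n}}"
  by (simp add: Zterm_def T_def)

lemma map_shift:
  assumes "\<And>i. m \<le> i \<Longrightarrow> i < m' \<Longrightarrow> f i = g (i + c)" "M = m + c" "M' = m' + c"
  shows "map f [m..<m'] = map g [M..<M']"
  by (rule nth_equalityI) (use assms in \<open>auto simp: add.commute add.left_commute\<close>)

lemma lnest_Nil[simp]: "lnest br x [] = x" by (simp add: lnest_def)
lemma lnest_Cons: "lnest br x (b # bs) = lnest br (br x b) bs" by (simp add: lnest_def)
lemma lnest_snoc: "lnest br x (bs @ [b]) = br (lnest br x bs) b" by (simp add: lnest_def)

locale DG =
  fixes scale :: "'k::field \<Rightarrow> 'v::ab_group_add \<Rightarrow> 'v"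
    and Lg :: "int \<Rightarrow> 'v set" and br :: "'v \<Rightarrow> 'v \<Rightarrow> 'v" and d :: "'v \<Rightarrow> 'v"
  assumes dg: "dgla scale Lg br d"
begin

lemmas dgc = dg[unfolded dgla_def]
lemma gv: "graded_vs scale Lg" by (rule dgc[THEN conjunct1])
lemma br_addL: "br (x + y) z = br x z + br y z"
  by (rule dgc[THEN conjunct2, THEN conjunct1, rule_format])
lemma br_addR: "br x (y + z) = br x y + br x z"
  by (rule dgc[THEN conjunct2, THEN conjunct2, THEN conjunct1, rule_format])
lemma br_deg: "x \<in> Lg i \<Longrightarrow> y \<in> Lg j \<Longrightarrow> br x y \<in> Lg (i + j)"
  by (rule dgc[THEN conjunct2, THEN conjunct2, THEN conjunct2, THEN conjunct2, THEN conjunct2, THEN conjunct1, rule_format])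
lemma antisym: "x \<in> Lg i \<Longrightarrow> y \<in> Lg j \<Longrightarrow> br x y = - sgn_act (i * j) (br y x)"
  by (rule dgc[THEN conjunct2, THEN conjunct2, THEN conjunct2, THEN conjunct2, THEN conjunct2, THEN conjunct2, THEN conjunct1, rule_format])
lemma jacobi: "x \<in> Lg i \<Longrightarrow> y \<in> Lg j \<Longrightarrow> z \<in> Lg l \<Longrightarrow>
         br x (br y z) = br (br x y) z + sgn_act (i * j) (br y (br x z))"
  by (rule dgc[THEN conjunct2, THEN conjunct2, THEN conjunct2, THEN conjunct2, THEN conjunct2, THEN conjunct2, THEN conjunct2, THEN conjunct1, rule_format])
lemma d_add: "d (x + y) = d x + d y"
  by (rule dgc[THEN conjunct2, THEN conjunct2, THEN conjunct2, THEN conjunct2, THEN conjunct2, THEN conjunct2, THEN conjunct2, THEN conjunct2, THEN conjunct1, rule_format])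
lemma d_deg: "x \<in> Lg i \<Longrightarrow> d x \<in> Lg (i - 1)"
  by (rule dgc[THEN conjunct2, THEN conjunct2, THEN conjunct2, THEN conjunct2, THEN conjunct2, THEN conjunct2, THEN conjunct2, THEN conjunct2, THEN conjunct2, THEN conjunct2, THEN conjunct1, rule_format])
lemma zero_in: "0 \<in> Lg i" using gv unfolding graded_vs_def by blast

lemma d_zero: "d 0 = 0" using d_add[of 0 0] by simp
lemma br_zeroL[simp]: "br 0 y = 0" using br_addL[of 0 0 y] by simp
lemma br_zeroR[simp]: "br x 0 = 0" using br_addR[of x 0 0] by simp
lemma br_minusL: "br (- x) y = - br x y"
proof -
  have "br x y + br (- x) y = 0" using br_addL[of x "- x" y] by simp
  then show ?thesis by (metis minus_unique)
qed
lemma br_minusR: "br x (- y) = - br x y"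
proof -
  have "br x y + br x (- y) = 0" using br_addR[of x y "- y"] by simp
  then show ?thesis by (metis minus_unique)
qed
lemma br_sgnL: "br (sgn_act e x) y = sgn_act e (br x y)" by (simp add: sgn_act_def br_minusL)
lemma br_sgnR: "br x (sgn_act e y) = sgn_act e (br x y)" by (simp add: sgn_act_def br_minusR)

lemma lnest_zero[simp]: "lnest br 0 bs = 0"
  by (induction bs rule: rev_induct) (auto simp: lnest_snoc)
lemma lnest_add: "lnest br (x + y) bs = lnest br x bs + lnest br y bs"
  by (induction bs rule: rev_induct) (auto simp: lnest_snoc br_addL)
lemma lnest_minus: "lnest br (- x) bs = - lnest br x bs"
  by (induction bs rule: rev_induct) (auto simp: lnest_snoc br_minusL)
lemma lnest_sgn: "lnest br (sgn_act e x) bs = sgn_act e (lnest br x bs)"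
  by (simp add: sgn_act_def lnest_minus)

lemma lnest_deg:
  assumes "x \<in> Lg m" "\<And>i. m1 \<le> i \<Longrightarrow> i < m2 \<Longrightarrow> f i \<in> Lg (g i)"
  shows "lnest br x (map f [m1..<m2]) \<in> Lg (m + (\<Sum>i\<in>{m1..<m2}. g i))"
  using assms(2)
proof (induction m2)
  case 0 then show ?case using assms(1) by simp
next
  case (Suc m2)
  show ?case
  proof (cases "m1 \<le> m2")
    case True
    have e: "lnest br x (map f [m1..<Suc m2]) = br (lnest br x (map f [m1..<m2])) (f m2)"
      using True by (simp add: lnest_snoc)
    have IH: "lnest br x (map f [m1..<m2]) \<in> Lg (m + (\<Sum>i\<in>{m1..<m2}. g i))"
      by (rule Suc.IH) (rule Suc.prems, assumption, simp)
    have fm: "f m2 \<in> Lg (g m2)" using Suc.prems True by simp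
    have s: "(\<Sum>i\<in>{m1..<Suc m2}. g i) = (\<Sum>i\<in>{m1..<m2}. g i) + g m2"
      using True by (rule sum.atLeastLessThan_Suc)
    show ?thesis unfolding e s using br_deg[OF IH fm] by (simp only: add.assoc)
  next
    case False then show ?thesis using assms(1) by simp
  qed
qed

lemma proj1: assumes "x \<in> Lg m" shows "proj Lg 1 x = (if m = 1 then x else 0)"
proof -
  define f where "f i = (if i = m then x else 0)" for i
  let ?P = "\<lambda>f :: int \<Rightarrow> 'v. finite {i. f i \<noteq> 0} \<and> (\<forall>i. f i \<in> Lg i) \<and> x = sum f {i. f i \<noteq> 0}"
  have ex: "\<exists>!f. ?P f" using gv by (simp add: graded_vs_def)
  have sub: "{i. f i \<noteq> 0} \<subseteq> {m}" by (auto simp: f_def)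
  have "?P f"
  proof (intro conjI allI)
    show "finite {i. f i \<noteq> 0}" using sub finite_subset by blast
    show "f i \<in> Lg i" for i using assms zero_in by (auto simp: f_def)
    show "x = sum f {i. f i \<noteq> 0}"
    proof (cases "x = 0")
      case True then show ?thesis by (simp add: f_def)
    next
      case False then have "{i. f i \<noteq> 0} = {m}" by (auto simp: f_def)
      then show ?thesis by (simp add: f_def)
    qed
  qed
  then have "(THE f. ?P f) = f" using the1_equality[OF ex] by blast
  then show ?thesis unfolding proj_def by (simp add: f_def)
qed

lemma Dop_deg: "x \<in> Lg m \<Longrightarrow> Dop Lg d x \<in> Lg 0"
  using proj1 d_deg[of x 1] zero_in by (auto simp: Dop_def d_zero)
lemma Dop_zero: "x \<in> Lg m \<Longrightarrow> m \<noteq> 1 \<Longrightarrow> Dop Lg d x = 0"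
  using proj1 by (auto simp: Dop_def d_zero)

context
  fixes a :: "nat \<Rightarrow> 'v" and deg :: "nat \<Rightarrow> int" and n :: nat
  assumes ha: "\<forall>i\<le>n. a i \<in> Lg (deg i)"
begin

lemma swap_term:
  assumes p: "p permutes {0..n}" and jk: "j + k < n"
  shows "T Lg br d a deg n k j (p \<circ> swp j k) = T Lg br d a deg n j k p"
proof -
  define q where "q = p \<circ> swp j k"
  have pin: "i \<le> n \<Longrightarrow> p i \<le> n" for i using permutes_in_image[OF p, of i] by simp
  have ap: "i \<le> n \<Longrightarrow> a (p i) \<in> Lg (deg (p i))" for i using ha pin by blast
  define X where "X = lnest br (Dop Lg d (a (p 0))) (map (\<lambda>i. a (p i)) [1..<j+1])"
  define Y where "Y = lnest br (Dop Lg d (a (p (j+1)))) (map (\<lambda>i. a (p i)) [j+2..<j+k+2])"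
  define R where "R = map (\<lambda>i. a (p i)) [j+k+2..<n+1]"
  define sX where "sX = (\<Sum>i\<in>{1..j}. deg (p i))"
  define sY where "sY = (\<Sum>i\<in>{j+2..j+k+1}. deg (p i))"
  have X: "X \<in> Lg sX"
  proof -
    have "X \<in> Lg (0 + (\<Sum>i\<in>{1..<j+1}. deg (p i)))" unfolding X_def
      by (rule lnest_deg[OF Dop_deg[OF ap]]) (use jk in \<open>auto intro: ap\<close>)
    then show ?thesis by (simp add: sX_def atLeastLessThanSuc_atLeastAtMost)
  qed
  have Y: "Y \<in> Lg sY"
  proof -
    have "Y \<in> Lg (0 + (\<Sum>i\<in>{j+2..<j+k+2}. deg (p i)))" unfolding Y_def
      by (rule lnest_deg[OF Dop_deg[OF ap]]) (use jk in \<open>auto intro: ap\<close>)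
    moreover have "{j+2..<j+k+2} = {j+2..j+k+1}" by auto
    ultimately show ?thesis unfolding sY_def by (simp only: add_0)
  qed
  have hq0: "q 0 = p (j+1)" by (simp add: q_def swp_def)
  have hqk: "q (k+1) = p 0" by (simp add: q_def swp_def)
  have mX: "map (\<lambda>i. a (q i)) [1..<k+1] = map (\<lambda>i. a (p i)) [j+2..<j+k+2]"
    by (rule map_shift[where c="j+1"]) (auto simp: q_def swp_def)
  have mY: "map (\<lambda>i. a (q i)) [k+2..<k+j+2] = map (\<lambda>i. a (p i)) [1..<j+1]"
    by (rule map_shift[where c="k+1", symmetric]) (auto simp: q_def swp_def)
  have mR: "map (\<lambda>i. a (q i)) [k+j+2..<n+1] = R"
    unfolding R_def by (rule map_shift[where c=0]) (auto simp: q_def swp_def)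
  have sq: "(\<Sum>i\<in>{1..k}. deg (q i)) = sY"
  proof -
    have "(\<Sum>i\<in>{1..k}. deg (q i)) = (\<Sum>i\<in>{1..k}. deg (p (i + (j+1))))"
      by (rule sum.cong) (auto simp: q_def swp_def)
    also have "\<dots> = (\<Sum>i\<in>{1+(j+1)..k+(j+1)}. deg (p i))"
      by (rule sum.shift_bounds_cl_nat_ivl[symmetric])
    finally show ?thesis by (simp add: sY_def add.commute add.left_commute)
  qed
  have ev: "even (koszul_exp deg n q - koszul_exp deg n p
      - (\<Sum>i\<in>{j+1..j+k+1}. deg (p i)) * (\<Sum>i\<in>{0..j}. deg (p i)))"
    using koszul_comp[OF p swp_permutes[OF jk], of deg] koszul_swp[OF jk, of "deg \<circ> p"]
    by (simp add: q_def)
  have Tq: "T Lg br d a deg n k j q = sgn_act (koszul_exp deg n q + sY) (lnest br (br Y X) R)"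
    unfolding T_def hq0 hqk mX mY mR sq X_def Y_def ..
  have Tp: "T Lg br d a deg n j k p = sgn_act (koszul_exp deg n p + sX) (lnest br (br X Y) R)"
    unfolding T_def X_def Y_def R_def sX_def ..
  show ?thesis
  proof (cases "deg (p 0) = 1 \<and> deg (p (j+1)) = 1")
    case True
    have s1: "(\<Sum>i\<in>{0..j}. deg (p i)) = 1 + sX"
      using True by (simp add: sX_def sum.atLeast_Suc_atMost)
    have s2: "(\<Sum>i\<in>{j+1..j+k+1}. deg (p i)) = 1 + sY"
      using True by (simp add: sY_def sum.atLeast_Suc_atMost)
    have "T Lg br d a deg n k j q = sgn_act (koszul_exp deg n q + sY)
        (sgn_act 1 (sgn_act (sY * sX) (lnest br (br X Y) R)))"
      unfolding Tq antisym[OF Y X] neg_sgn[of "sgn_act _ _"] lnest_sgn ..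
    also have "\<dots> = sgn_act (koszul_exp deg n q + sY + 1 + sY * sX) (lnest br (br X Y) R)"
      by (simp add: sgn_act_add add.assoc)
    also have "\<dots> = sgn_act (koszul_exp deg n p + sX) (lnest br (br X Y) R)"
    proof (rule sgn_act_cong)
      have "koszul_exp deg n q + sY + 1 + sY * sX - (koszul_exp deg n p + sX)
         = (koszul_exp deg n q - koszul_exp deg n p - (1 + sY) * (1 + sX)) + 2 * (1 + sY + sY * sX)"
        by (simp add: algebra_simps)
      moreover have "even ((koszul_exp deg n q - koszul_exp deg n p - (1 + sY) * (1 + sX)) + 2 * (1 + sY + sY * sX))"
        by (rule dvd_add[OF ev[unfolded s1 s2] dvd_triv_left])
      ultimately show "even (koszul_exp deg n q + sY + 1 + sY * sX - (koszul_exp deg n p + sX))"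
        by (simp only:)
    qed
    finally show ?thesis using Tp q_def by simp
  next
    case False
    then have "X = 0 \<or> Y = 0" unfolding X_def Y_def
      using Dop_zero[OF ap[of 0]] Dop_zero[OF ap[of "j+1"]] jk by auto
    then show ?thesis using Tp Tq q_def by auto
  qed
qed

lemma move_term:
  assumes p: "p permutes {0..n}" and jk: "j + k + 1 < n"
  shows "T Lg br d a deg n j k p = T Lg br d a deg n j (k+1) p + T Lg br d a deg n (j+1) k (p \<circ> mv j k)"
proof -
  define q where "q = p \<circ> mv j k"
  have pin: "i \<le> n \<Longrightarrow> p i \<le> n" for i using permutes_in_image[OF p, of i] by simp
  have ap: "i \<le> n \<Longrightarrow> a (p i) \<in> Lg (deg (p i))" for i using ha pin by blast
  define X where "X = lnest br (Dop Lg d (a (p 0))) (map (\<lambda>i. a (p i)) [1..<j+1])"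
  define Y where "Y = lnest br (Dop Lg d (a (p (j+1)))) (map (\<lambda>i. a (p i)) [j+2..<j+k+2])"
  define R where "R = map (\<lambda>i. a (p i)) [Suc (j+k+2)..<n+1]"
  define c where "c = a (p (j+k+2))"
  define dc where "dc = deg (p (j+k+2))"
  define sX where "sX = (\<Sum>i\<in>{1..j}. deg (p i))"
  define sY where "sY = (\<Sum>i\<in>{j+2..j+k+1}. deg (p i))"
  have C: "c \<in> Lg dc" unfolding c_def dc_def using ap jk by simp
  have X: "X \<in> Lg sX"
  proof -
    have "X \<in> Lg (0 + (\<Sum>i\<in>{1..<j+1}. deg (p i)))" unfolding X_def
      by (rule lnest_deg[OF Dop_deg[OF ap]]) (use jk in \<open>auto intro: ap\<close>)
    then show ?thesis by (simp add: sX_def atLeastLessThanSuc_atLeastAtMost)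
  qed
  have Y: "Y \<in> Lg sY"
  proof -
    have "Y \<in> Lg (0 + (\<Sum>i\<in>{j+2..<j+k+2}. deg (p i)))" unfolding Y_def
      by (rule lnest_deg[OF Dop_deg[OF ap]]) (use jk in \<open>auto intro: ap\<close>)
    moreover have "{j+2..<j+k+2} = {j+2..j+k+1}" by auto
    ultimately show ?thesis unfolding sY_def by (simp only: add_0)
  qed
  have mR0: "map (\<lambda>i. a (p i)) [j+k+2..<n+1] = c # R"
    unfolding R_def c_def using jk by (subst upt_conv_Cons) auto
  have mY1: "map (\<lambda>i. a (p i)) [j+2..<j+(k+1)+2] = map (\<lambda>i. a (p i)) [j+2..<j+k+2] @ [c]"
    unfolding c_def by simp
  have mR1: "map (\<lambda>i. a (p i)) [j+(k+1)+2..<n+1] = R"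
    unfolding R_def by (simp add: add.assoc)
  have Tp: "T Lg br d a deg n j k p = sgn_act (koszul_exp deg n p + sX) (lnest br (br (br X Y) c) R)"
    unfolding T_def mR0 lnest_Cons X_def Y_def sX_def ..
  have Tp1: "T Lg br d a deg n j (k+1) p = sgn_act (koszul_exp deg n p + sX) (lnest br (br X (br Y c)) R)"
    unfolding T_def mY1 mR1 lnest_snoc X_def Y_def sX_def ..
  have hq0: "q 0 = p 0" by (simp add: q_def mv_def)
  have hq1: "q (j+1+1) = p (j+1)" by (simp add: q_def mv_def)
  have mX2: "map (\<lambda>i. a (q i)) [1..<j+1+1] = map (\<lambda>i. a (p i)) [1..<j+1] @ [c]"
  proof -
    have "map (\<lambda>i. a (q i)) [1..<j+1] = map (\<lambda>i. a (p i)) [1..<j+1]"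
      by (rule map_shift[where c=0]) (auto simp: q_def mv_def)
    moreover have "q (j+1) = p (j+k+2)" by (simp add: q_def mv_def)
    ultimately show ?thesis by (simp add: c_def)
  qed
  have mY2: "map (\<lambda>i. a (q i)) [j+1+2..<j+1+k+2] = map (\<lambda>i. a (p i)) [j+2..<j+k+2]"
    by (rule map_shift[where c=1, symmetric]) (auto simp: q_def mv_def)
  have mR2: "map (\<lambda>i. a (q i)) [j+1+k+2..<n+1] = R"
    unfolding R_def by (rule map_shift[where c=0]) (auto simp: q_def mv_def)
  have sq: "(\<Sum>i\<in>{1..j+1}. deg (q i)) = sX + dc"
  proof -
    have "(\<Sum>i\<in>{1..j+1}. deg (q i)) = (\<Sum>i\<in>{1..j}. deg (q i)) + deg (q (j+1))"
      by simp
    moreover have "(\<Sum>i\<in>{1..j}. deg (q i)) = sX"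
      unfolding sX_def by (rule sum.cong) (auto simp: q_def mv_def)
    moreover have "q (j+1) = p (j+k+2)" by (simp add: q_def mv_def)
    ultimately show ?thesis by (simp add: dc_def)
  qed
  have Tq: "T Lg br d a deg n (j+1) k q = sgn_act (koszul_exp deg n q + (sX + dc)) (lnest br (br (br X c) Y) R)"
    unfolding T_def hq0 hq1 mX2 mY2 mR2 sq lnest_snoc X_def Y_def ..
  have ev: "even (koszul_exp deg n q - koszul_exp deg n p - dc * (\<Sum>i\<in>{j+1..j+k+1}. deg (p i)))"
    using koszul_comp[OF p mv_permutes[of j k n], of deg] koszul_mv[of j k n "deg \<circ> p"] jk
    by (simp add: q_def dc_def)
  show ?thesis
  proof (cases "deg (p (j+1)) = 1")
    case True
    have s2: "(\<Sum>i\<in>{j+1..j+k+1}. deg (p i)) = 1 + sY"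
      using True by (simp add: sY_def sum.atLeast_Suc_atMost)
    have XC: "br X c \<in> Lg (sX + dc)" using br_deg[OF X C] .
    have J: "br (br X Y) c = br X (br Y c) + sgn_act (sX * sY) (sgn_act (sY * (sX + dc)) (br (br X c) Y))"
      using jacobi[OF X Y C] antisym[OF Y XC] by (simp add: sgn_act_minus)
    have "T Lg br d a deg n j k p = T Lg br d a deg n j (k+1) p
       + sgn_act (koszul_exp deg n p + sX + sX * sY + sY * (sX + dc)) (lnest br (br (br X c) Y) R)"
      unfolding Tp Tp1 J lnest_add lnest_sgn sgn_act_plus by (simp add: sgn_act_add add.assoc)
    also have "sgn_act (koszul_exp deg n p + sX + sX * sY + sY * (sX + dc)) (lnest br (br (br X c) Y) R)
        = T Lg br d a deg n (j+1) k q"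
      unfolding Tq
    proof (rule sgn_act_cong)
      have "koszul_exp deg n p + sX + sX * sY + sY * (sX + dc) - (koszul_exp deg n q + (sX + dc))
         = - (koszul_exp deg n q - koszul_exp deg n p - dc * (1 + sY)) + 2 * (sX * sY - dc)"
        by (simp add: algebra_simps)
      moreover have "even (- (koszul_exp deg n q - koszul_exp deg n p - dc * (1 + sY)) + 2 * (sX * sY - dc))"
        by (rule dvd_add[OF dvd_minus_iff[THEN iffD2, OF ev[unfolded s2]] dvd_triv_left])
      ultimately show "even (koszul_exp deg n p + sX + sX * sY + sY * (sX + dc) - (koszul_exp deg n q + (sX + dc)))"
        by (simp only:)
    qed
    finally show ?thesis by (simp add: q_def)
  next
    case False
    then have "Y = 0" unfolding Y_def using Dop_zero[OF ap[of "j+1"]] jk by auto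
    then show ?thesis using Tp Tp1 Tq q_def by auto
  qed
qed

end

end

theorem lemma2:
  fixes scale :: "'k::field \<Rightarrow> 'v::ab_group_add \<Rightarrow> 'v"
    and Lg :: "int \<Rightarrow> 'v set" and br :: "'v \<Rightarrow> 'v \<Rightarrow> 'v" and d :: "'v \<Rightarrow> 'v"
    and a :: "nat \<Rightarrow> 'v" and deg :: "nat \<Rightarrow> int" and n j k :: nat
  assumes "dgla scale Lg br d"
    and "\<forall>i\<le>n. a i \<in> Lg (deg i)"
    and "j + k < n"
  shows "Zterm Lg br d a deg n j k = Zterm Lg br d a deg n k j \<and>
         (j + k + 1 < n \<longrightarrow>
            Zterm Lg br d a deg n j k = Zterm Lg br d a deg n (j+1) k + Zterm Lg br d a deg n j (k+1))"
proof -
  interpret DG scale Lg br d by (rule DG.intro) (rule assms(1))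
  have "Zterm Lg br d a deg n k j = (\<Sum>p\<in>{p. p permutes {0..n}}. T Lg br d a deg n k j (p \<circ> swp j k))"
    unfolding Zterm_T by (rule sum_permutations_compose_right[OF swp_permutes[OF assms(3)]])
  also have "\<dots> = Zterm Lg br d a deg n j k"
    unfolding Zterm_T by (rule sum.cong) (auto intro: swap_term[OF assms(2) _ assms(3)])
  finally have 1: "Zterm Lg br d a deg n j k = Zterm Lg br d a deg n k j" ..
  have 2: "Zterm Lg br d a deg n j k = Zterm Lg br d a deg n (j+1) k + Zterm Lg br d a deg n j (k+1)"
    if jk: "j + k + 1 < n"
  proof -
    have "Zterm Lg br d a deg n j k = (\<Sum>p\<in>{p. p permutes {0..n}}.
           T Lg br d a deg n j (k+1) p + T Lg br d a deg n (j+1) k (p \<circ> mv j k))"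
      unfolding Zterm_T by (rule sum.cong) (simp_all add: move_term[OF assms(2) _ jk])
    also have "\<dots> = Zterm Lg br d a deg n j (k+1) + (\<Sum>p\<in>{p. p permutes {0..n}}. T Lg br d a deg n (j+1) k (p \<circ> mv j k))"
      unfolding Zterm_T by (rule sum.distrib)
    also have "(\<Sum>p\<in>{p. p permutes {0..n}}. T Lg br d a deg n (j+1) k (p \<circ> mv j k)) = Zterm Lg br d a deg n (j+1) k"
      unfolding Zterm_T using jk by (intro sum_permutations_compose_right[symmetric] mv_permutes) simp
    finally show ?thesis by (simp add: add.commute)
  qed
  show ?thesis using 1 2 by blast
qed

end
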